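(* Let $k\ge 2$ be even and $n>k/2$. Any encoding that, given access to encodings of both rows of a $2\times n$ array $A$ answering unsorted (or sorted) 1-sided Top-$k$ queries on each row, answers all unsorted 3-sided Top-$k$ queries on $A$ must use at least $\lceil (n-k/2)\lg(1+\sqrt2)\rceil-o(n)\approx 1.27(n-k/2)-o(n)$ additional bits (in the worst case over arrays $A$). Equivalently, there is a family of $2\times n$ arrays with distinct entries, all of whose rows give identical answers to every 1-sided Top-$k$ query on that row, containing at least $2^{(n-k/2)\lg(1+\sqrt2)-o(n)}$ arrays with pairwise distinct answer sets to the unsorted 3-sided Top-$k$ queries.
   Context: All arrays have pairwise distinct entries from a totally ordered set. For a 1D array $B[1..n]$, the 1-sided query Top-$k(1,i,B)$ returns the positions of the $k$ largest values of $B[1..i]$ (all positions if $i\le k$); sorted queries report these positions in decreasing order of value, unsorted queries in arbitrary order. For a $2\times n$ array $A$, a 3-sided Top-$k$ query Top-$k(r,s,1,b,A)$ with $1\le r\le s\le 2$, $1\le b\le n$ returns the positions of the $k$ largest values in $A[r..s][1..b]$ (rows $r..s$, columns $1..b$). "Additional bits" means the length of the bit string that, together with the given row encodings, determines all answers. *)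

theory Defs
  imports Complex_Main "HOL-Library.Landau_Symbols"
begin

text \<open>Positions of the k largest values of v over the finite position set S
  (all of S if card S \<le> k); values are assumed pairwise distinct on S.\<close>
definition topk_set :: "nat \<Rightarrow> 'p set \<Rightarrow> ('p \<Rightarrow> 'v::linorder) \<Rightarrow> 'p set" where
  "topk_set k S v = {p \<in> S. card {q \<in> S. v p < v q} < k}"

definition topk_sorted :: "nat \<Rightarrow> 'p set \<Rightarrow> ('p \<Rightarrow> 'v::linorder) \<Rightarrow> 'p list" where
  "topk_sorted k S v =
     (THE xs. set xs = topk_set k S v \<and> distinct xs \<and> sorted_wrt (\<lambda>p q. v p > v q) xs)"

definition grid :: "nat \<Rightarrow> (nat \<times> nat) set" where
  "grid n = {1..2} \<times> {1..n}"

definition distinct_array :: "nat \<Rightarrow> (nat \<times> nat \<Rightarrow> 'v) \<Rightarrow> bool" where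
  "distinct_array n A \<longleftrightarrow> inj_on A (grid n)"

definition row_query :: "nat \<Rightarrow> (nat \<times> nat \<Rightarrow> 'v::linorder) \<Rightarrow> nat \<Rightarrow> nat \<Rightarrow> nat list" where
  "row_query k A r i = topk_sorted k {1..i} (\<lambda>j. A (r, j))"

definition three_sided :: "nat \<Rightarrow> (nat \<times> nat \<Rightarrow> 'v::linorder) \<Rightarrow> nat \<Rightarrow> nat \<Rightarrow> nat \<Rightarrow> (nat \<times> nat) set" where
  "three_sided k A r s b = topk_set k ({r..s} \<times> {1..b}) A"

definition three_sided_answers ::
  "nat \<Rightarrow> nat \<Rightarrow> (nat \<times> nat \<Rightarrow> 'v::linorder) \<Rightarrow> nat \<times> nat \<times> nat \<Rightarrow> (nat \<times> nat) set" where
  "three_sided_answers k n A = (\<lambda>(r, s, b).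
     if 1 \<le> r \<and> r \<le> s \<and> s \<le> 2 \<and> 1 \<le> b \<and> b \<le> n then three_sided k A r s b else {})"

end

theory Submission
  imports Defs
begin

fun ok :: "nat list \<Rightarrow> bool" where
  "ok [] = True"
| "ok [a] = (a \<le> 2)"
| "ok (a # b # w) = (a \<le> 2 \<and> \<not>(a = 1 \<and> b = 2) \<and> \<not>(a = 2 \<and> b = 1) \<and> ok (b # w))"

lemma ok_le2: "ok w \<Longrightarrow> x \<in> set w \<Longrightarrow> x \<le> 2"
  by (induction w rule: ok.induct) auto

lemma ok_adj: "ok w \<Longrightarrow> Suc i < length w \<Longrightarrow>
    \<not>(w!i = 1 \<and> w!Suc i = 2) \<and> \<not>(w!i = 2 \<and> w!Suc i = 1)"
proof (induction w arbitrary: i rule: ok.induct)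
  case (3 a b w)
  then show ?case by (cases i) auto
qed auto

lemma ok_0: "ok v \<Longrightarrow> ok (0 # v)"
  by (cases v) auto

fun gen :: "nat \<Rightarrow> nat list set" where
  "gen 0 = {[]}"
| "gen (Suc 0) = {[0],[1],[2]}"
| "gen (Suc (Suc m)) = (\<lambda>w. 0 # w) ` gen (Suc m)
      \<union> (\<lambda>w. (if hd w = 2 then 2 else 1) # w) ` gen (Suc m)
      \<union> (\<lambda>w. 2 # 0 # w) ` gen m"

lemma gen_props: "w \<in> gen m \<Longrightarrow> length w = m \<and> ok w"
proof (induction m arbitrary: w rule: gen.induct)
  case (3 m)
  show ?case
  proof -
    { fix v assume v: "v \<in> gen (Suc m)"
      then have "length v = Suc m" "ok v" using 3 by auto
      then obtain a u where vu: "v = a # u" by (cases v) auto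
      have "a \<le> 2" using \<open>ok v\<close> vu by (cases u) auto
      then have "ok ((if hd v = 2 then 2 else 1) # v)"
        using \<open>ok v\<close> vu by auto }
    moreover
    { fix v assume v: "v \<in> gen m"
      then have "ok (2 # 0 # v)" using 3 by (cases v) auto }
    ultimately show ?thesis using 3 ok_0 by auto
  qed
qed auto

lemma finite_gen: "finite (gen m)"
  by (induction m rule: gen.induct) auto

lemma card_gen: "real (card (gen m)) \<ge> (1 + sqrt 2) ^ m"
proof (induction m rule: gen.induct)
  case 1 then show ?case by simp
next
  case 2
  have "sqrt 2 \<le> 2" by (simp add: real_sqrt_le_iff[of 2 4, simplified])
  moreover have "card {[0::nat],[1],[2]} = 3" by simp
  ultimately show ?case by simp
next
  case (3 m)
  let ?A = "(\<lambda>w. 0 # w) ` gen (Suc m)"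
  let ?B = "(\<lambda>w. (if hd w = 2 then 2 else 1) # w) ` gen (Suc m)"
  let ?C = "(\<lambda>w. 2 # 0 # w) ` gen m"
  have fA: "finite ?A" "finite ?B" "finite ?C" using finite_gen by auto
  have cA: "card ?A = card (gen (Suc m))" by (rule card_image) (auto simp: inj_on_def)
  have cB: "card ?B = card (gen (Suc m))" by (rule card_image) (auto simp: inj_on_def)
  have cC: "card ?C = card (gen m)" by (rule card_image) (auto simp: inj_on_def)
  have d1: "?A \<inter> ?B = {}" by (auto split: if_splits)
  have d2: "(?A \<union> ?B) \<inter> ?C = {}"
  proof -
    { fix v assume "v \<in> gen (Suc m)"
      then have "length v = Suc m" using gen_props by blast
      then obtain a u where "v = a # u" by (cases v) auto
      then have "(if hd v = 2 then 2 else 1) # v \<noteq> 2 # 0 # x" for x by auto }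
    then show ?thesis by auto
  qed
  have "card (gen (Suc (Suc m))) = card ?A + card ?B + card ?C"
    using fA d1 d2 by (simp add: card_Un_disjoint)
  then have eq: "real (card (gen (Suc (Suc m)))) = 2 * real (card (gen (Suc m))) + real (card (gen m))"
    using cA cB cC by simp
  have r2: "(1 + sqrt 2) ^ 2 = 2 * (1 + sqrt 2) + 1"
    by (simp add: power2_eq_square algebra_simps)
  have "(1 + sqrt 2) ^ Suc (Suc m) = 2 * (1 + sqrt 2) ^ Suc m + (1 + sqrt 2) ^ m"
  proof -
    have "(1 + sqrt 2) ^ Suc (Suc m) = (1 + sqrt 2) ^ m * (1 + sqrt 2) ^ 2"
      by (simp add: power_add[symmetric])
    also have "\<dots> = (1 + sqrt 2) ^ m * (2 * (1 + sqrt 2) + 1)" using r2 by simp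
    finally show ?thesis by (simp add: algebra_simps)
  qed
  then show ?case using eq 3 by linarith
qed


definition cw :: "nat \<Rightarrow> nat list \<Rightarrow> nat \<Rightarrow> nat" where
  "cw j w b = (if j < b \<and> b - Suc j < length w then w ! (b - Suc j) else 0)"

definition xo :: "nat \<Rightarrow> nat list \<Rightarrow> nat \<Rightarrow> nat" where
  "xo j w i = (if cw j w i = 2 then 0 else if cw j w (Suc i) = 1 then 12 else 6)"

definition yo :: "nat \<Rightarrow> nat list \<Rightarrow> nat \<Rightarrow> nat" where
  "yo j w i = (if cw j w i = 1 then 0 else if cw j w (Suc i) = 2 then 12 else 7)"

definition arr :: "nat \<Rightarrow> nat \<Rightarrow> nat list \<Rightarrow> nat \<times> nat \<Rightarrow> nat" where
  "arr n j w = (\<lambda>(r, i). if i < j then 10 * n + 100 + 2 * i + r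
       else 10 * i + (if r = 1 then xo j w i else yo j w i))"

lemma cw_le2: "ok w \<Longrightarrow> cw j w b \<le> 2"
  unfolding cw_def using ok_le2 nth_mem by fastforce

lemma cw_adj: assumes "ok w"
  shows "\<not>(cw j w b = 1 \<and> cw j w (Suc b) = 2) \<and> \<not>(cw j w b = 2 \<and> cw j w (Suc b) = 1)"
proof (cases "j < b \<and> Suc b - Suc j < length w")
  case True
  then have "Suc (b - Suc j) < length w" "Suc b - Suc j = Suc (b - Suc j)" by auto
  then show ?thesis using ok_adj[OF assms, of "b - Suc j"] True unfolding cw_def by auto
next
  case False
  then show ?thesis unfolding cw_def by (auto simp: less_Suc_eq)
qed

lemma AH: "i < j \<Longrightarrow> arr n j w (r, i) = 10 * n + 100 + 2 * i + r"
  by (simp add: arr_def)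
lemma A1: "j \<le> i \<Longrightarrow> arr n j w (1, i) = 10 * i + xo j w i"
  by (simp add: arr_def)
lemma A2: "j \<le> i \<Longrightarrow> arr n j w (2, i) = 10 * i + yo j w i"
  by (simp add: arr_def)
lemma xo_le: "xo j w i \<le> 12" by (simp add: xo_def)
lemma yo_le: "yo j w i \<le> 12" by (simp add: yo_def)

lemma A_bounds: "j \<le> i \<Longrightarrow> 10 * i \<le> arr n j w (r, i) \<and> arr n j w (r, i) \<le> 10 * i + 12"
  by (simp add: arr_def xo_le yo_le)

lemma A_mono: assumes "j \<le> p" "p < q" shows "arr n j w (r, p) < arr n j w (r, q)"
proof (cases "q = Suc p")
  case True
  then show ?thesis using assms unfolding arr_def xo_def yo_def by auto
next
  case False
  then have "q \<ge> p + 2" using assms by auto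
  then show ?thesis using A_bounds[OF assms(1), of n w r] A_bounds[of j q n w r] assms by auto
qed


definition ordP :: "nat \<Rightarrow> nat \<Rightarrow> nat \<Rightarrow> bool" where
  "ordP j p q = (if p < j then q < j \<and> p < q else (q < j \<or> p < q))"

lemma A_order: assumes "r \<in> {1,2}" "p \<le> n" "q \<le> n"
  shows "arr n j w (r, p) < arr n j w (r, q) \<longleftrightarrow> ordP j p q"
proof (cases "p < j")
  case pj: True
  show ?thesis
  proof (cases "q < j")
    case True then show ?thesis using pj by (simp add: AH ordP_def)
  next
    case False then show ?thesis using pj A_bounds[of j q n w r] assms
      by (simp add: AH ordP_def)
  qed
next
  case pj: False
  show ?thesis
  proof (cases "q < j")
    case True then show ?thesis using pj A_bounds[of j p n w r] assms
      by (simp add: AH ordP_def)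
  next
    case False
    then show ?thesis using pj A_mono[of j p q n w r] A_mono[of j q p n w r]
      by (cases "p = q") (auto simp: ordP_def linorder_neq_iff)
  qed
qed

lemma A12: assumes "j \<le> p" "j \<le> q" shows "arr n j w (1, p) \<noteq> arr n j w (2, q)"
proof
  assume e: "arr n j w (1, p) = arr n j w (2, q)"
  then have e2: "10 * p + xo j w p = 10 * q + yo j w q" using A1[OF assms(1)] A2[OF assms(2)] by simp
  have xs: "xo j w p = 0 \<and> cw j w p = 2 \<or> xo j w p = 6 \<or> xo j w p = 12 \<and> cw j w (Suc p) = 1"
    by (auto simp: xo_def)
  have ys: "yo j w q = 0 \<and> cw j w q = 1 \<or> yo j w q = 7 \<or> yo j w q = 12 \<and> cw j w (Suc q) = 2"
    by (auto simp: yo_def)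
  from xs ys e2 show False
  proof (elim disjE conjE)
  qed (simp_all, presburger+)
qed

lemma A_inj: assumes "ok w" shows "inj_on (arr n j w) (grid n)"
proof (rule inj_onI)
  fix x y assume x: "x \<in> grid n" and y: "y \<in> grid n" and e: "arr n j w x = arr n j w y"
  obtain r p where xr: "x = (r, p)" by fastforce
  obtain r' q where yr: "y = (r', q)" by fastforce
  have r: "r \<in> {1,2}" "r' \<in> {1,2}" "p \<le> n" "q \<le> n" using x y xr yr by (auto simp: grid_def)
  have e': "arr n j w (r, p) = arr n j w (r', q)" using e xr yr by simp
  show "x = y"
  proof (cases "r = r'")
    case True
    have "p = q"
    proof (rule ccontr)
      assume "p \<noteq> q"
      then have "ordP j p q \<or> ordP j q p" unfolding ordP_def by auto
      then show False using A_order[OF r(1) r(3) r(4), of j w] A_order[OF r(1) r(4) r(3), of j w] e' True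
        by auto
    qed
    then show ?thesis using True xr yr by simp
  next
    case False
    then have rr: "(r = 1 \<and> r' = 2) \<or> (r = 2 \<and> r' = 1)" using r by auto
    show ?thesis
    proof (cases "p < j")
      case pj: True
      show ?thesis
      proof (cases "q < j")
        case True
        have "2 * p + r = 2 * q + r'" using e' AH[OF pj, of n w r] AH[OF True, of n w r'] by simp
        then have False using rr by presburger
        then show ?thesis ..
      next
        case False
        then have "j \<le> q" by simp
        then show ?thesis using e' AH[OF pj, of n w r] A_bounds[of j q n w r'] r by simp
      qed
    next
      case pj: False
      show ?thesis
      proof (cases "q < j")
        case True
        have "j \<le> p" using pj by simp
        then show ?thesis using e' AH[OF True, of n w r'] A_bounds[of j p n w r] r by simp
      next
        case False
        then show ?thesis using rr e' pj A12[of j p q n w] A12[of j q p n w] by auto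
      qed
    qed
  qed
qed


lemma topk_set_cong:
  assumes "\<forall>p\<in>S. \<forall>q\<in>S. (v p < v q) = (v' p < v' q)"
  shows "topk_set k S v = topk_set k S v'"
proof -
  have "\<And>p. p \<in> S \<Longrightarrow> {q \<in> S. v p < v q} = {q \<in> S. v' p < v' q}" using assms by auto
  then show ?thesis unfolding topk_set_def by (auto intro: Collect_cong)
qed

lemma topk_sorted_cong:
  assumes a: "\<forall>p\<in>S. \<forall>q\<in>S. (v p < v q) = (v' p < v' q)"
  shows "topk_sorted k S v = topk_sorted k S v'"
proof -
  have T: "topk_set k S v = topk_set k S v'" using topk_set_cong[OF a] .
  have sub: "topk_set k S v \<subseteq> S" unfolding topk_set_def by auto
  have "(\<lambda>xs. set xs = topk_set k S v \<and> distinct xs \<and> sorted_wrt (\<lambda>p q. v p > v q) xs) =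
        (\<lambda>xs. set xs = topk_set k S v' \<and> distinct xs \<and> sorted_wrt (\<lambda>p q. v' p > v' q) xs)"
  proof (rule ext)
    fix xs
    show "(set xs = topk_set k S v \<and> distinct xs \<and> sorted_wrt (\<lambda>p q. v p > v q) xs) =
        (set xs = topk_set k S v' \<and> distinct xs \<and> sorted_wrt (\<lambda>p q. v' p > v' q) xs)"
    proof (cases "set xs = topk_set k S v")
      case True
      then have "set xs \<subseteq> S" using sub by simp
      then have "sorted_wrt (\<lambda>p q. v p > v q) xs = sorted_wrt (\<lambda>p q. v' p > v' q) xs"
        using a unfolding sorted_wrt_iff_nth_less by (auto dest!: nth_mem simp: subset_iff)
      then show ?thesis using T True by simp
    next
      case False
      then show ?thesis using T by simp
    qed
  qed
  then show ?thesis unfolding topk_sorted_def by simp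
qed

lemma row_eq:
  assumes "r \<in> {1,2}" "i \<le> n"
  shows "row_query k (arr n j w) r i = row_query k (arr n j w') r i"
  unfolding row_query_def
proof (rule topk_sorted_cong, intro ballI)
  fix p q assume "p \<in> {1..i}" "q \<in> {1..i}"
  then have "p \<le> n" "q \<le> n" using assms by auto
  then show "(arr n j w (r, p) < arr n j w (r, q)) = (arr n j w' (r, p) < arr n j w' (r, q))"
    using A_order[OF assms(1)] by simp
qed

lemma cardH: "card ({1..2::nat} \<times> {1..<j::nat}) = 2 * (j - 1)"
  by (simp add: card_cartesian_product)

lemma key1:
  assumes ok: "ok w" and j: "1 \<le> j" "j \<le> c" "Suc c \<le> n"
  shows "(1, c) \<in> topk_set (2 * j) ({1..2} \<times> {1..Suc c}) (arr n j w) \<longleftrightarrow> cw j w (Suc c) = 1"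
proof -
  let ?A = "arr n j w"
  let ?S = "{1..2::nat} \<times> {1..Suc c}"
  let ?G = "{q \<in> ?S. ?A (1, c) < ?A q}"
  let ?H = "{1..2::nat} \<times> {1..<j}"
  have mem: "(1, c) \<in> ?S" using j by auto
  have fG: "finite ?G" by (rule finite_subset[of _ ?S]) auto
  have v0: "?A (1, c) = 10 * c + xo j w c" using A1[OF j(2)] .
  show ?thesis
  proof (cases "cw j w (Suc c) = 1")
    case True
    have "cw j w c \<noteq> 2" using cw_adj[OF ok, of j c] True by auto
    then have x12: "xo j w c = 12" using True by (simp add: xo_def)
    have "?G \<subseteq> ?H \<union> {(1, Suc c)}"
    proof
      fix q assume q: "q \<in> ?G"
      obtain r i where qr: "q = (r, i)" by fastforce
      have ri: "r \<in> {1,2}" "1 \<le> i" "i \<le> Suc c" and lt: "?A (1, c) < ?A (r, i)" using q qr by auto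
      show "q \<in> ?H \<union> {(1, Suc c)}"
      proof (cases "i < j")
        case True then show ?thesis using qr ri by auto
      next
        case False
        then have ij: "j \<le> i" by simp
        have "i = Suc c \<and> r = 1"
        proof (rule ccontr)
          assume nc: "\<not> (i = Suc c \<and> r = 1)"
          consider "i + 1 \<le> c" | "i = c" | "i = Suc c \<and> r = 2" using ri nc by force
          then show False
          proof cases
            case 1
            then show False using A_bounds[OF ij, of n w r] lt v0 x12 by simp
          next
            case 2
            then have "r = 2" using lt ri by auto
            moreover have "cw j w (Suc c) \<noteq> 2" using True by simp
            ultimately show False using lt v0 x12 A2[OF ij, of n w] 2 by (simp add: yo_def split: if_splits)
          next
            case 3
            then show False using lt v0 x12 A2[OF ij, of n w] True by (simp add: yo_def)
          qed
        qed
        then show ?thesis using qr by simp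
      qed
    qed
    then have "card ?G \<le> card (?H \<union> {(1, Suc c)})" by (intro card_mono) auto
    also have "\<dots> \<le> card ?H + 1" by (metis One_nat_def card_Un_le card.empty card_insert_disjoint empty_iff finite.emptyI)
    finally have "card ?G < 2 * j" using cardH[of j] j by simp
    then show ?thesis using mem True unfolding topk_set_def by simp
  next
    case False
    then have xlt: "xo j w c \<le> 6" by (simp add: xo_def)
    have sub: "?H \<union> {(1, Suc c), (2, Suc c)} \<subseteq> ?G"
    proof
      fix q assume q: "q \<in> ?H \<union> {(1, Suc c), (2, Suc c)}"
      then have qS: "q \<in> ?S" using j by auto
      obtain r i where qr: "q = (r, i)" by fastforce
      have r: "r \<in> {1,2}" using q qr by auto
      have "?A (1, c) < ?A (r, i)"
      proof (cases "i < j")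
        case True
        then show ?thesis using AH[OF True, of n w r] v0 xlt j by simp
      next
        case False
        then have "i = Suc c" using q qr by auto
        then show ?thesis using A_bounds[of j "Suc c" n w r] v0 xlt j by simp
      qed
      then show "q \<in> ?G" using qS qr by simp
    qed
    have "card (?H \<union> {(1, Suc c), (2, Suc c)}) = card ?H + 2"
      using j by (subst card_Un_disjoint) auto
    then have "2 * j \<le> card (?H \<union> {(1, Suc c), (2, Suc c)})" using cardH[of j] j by simp
    also have "\<dots> \<le> card ?G" using card_mono[OF fG sub] .
    finally show ?thesis using mem False unfolding topk_set_def by simp
  qed
qed

lemma key2:
  assumes ok: "ok w" and j: "1 \<le> j" "j \<le> c" "Suc c \<le> n"
  shows "(2, c) \<in> topk_set (2 * j) ({1..2} \<times> {1..Suc c}) (arr n j w) \<longleftrightarrow> cw j w (Suc c) = 2"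
proof -
  let ?A = "arr n j w"
  let ?S = "{1..2::nat} \<times> {1..Suc c}"
  let ?G = "{q \<in> ?S. ?A (2, c) < ?A q}"
  let ?H = "{1..2::nat} \<times> {1..<j}"
  have mem: "(2, c) \<in> ?S" using j by auto
  have fG: "finite ?G" by (rule finite_subset[of _ ?S]) auto
  have v0: "?A (2, c) = 10 * c + yo j w c" using A2[OF j(2)] .
  show ?thesis
  proof (cases "cw j w (Suc c) = 2")
    case True
    have "cw j w c \<noteq> 1" using cw_adj[OF ok, of j c] True by auto
    then have x12: "yo j w c = 12" using True by (simp add: yo_def)
    have "?G \<subseteq> ?H \<union> {(2, Suc c)}"
    proof
      fix q assume q: "q \<in> ?G"
      obtain r i where qr: "q = (r, i)" by fastforce
      have ri: "r \<in> {1,2}" "1 \<le> i" "i \<le> Suc c" and lt: "?A (2, c) < ?A (r, i)" using q qr by auto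
      show "q \<in> ?H \<union> {(2, Suc c)}"
      proof (cases "i < j")
        case True then show ?thesis using qr ri by auto
      next
        case False
        then have ij: "j \<le> i" by simp
        have "i = Suc c \<and> r = 2"
        proof (rule ccontr)
          assume nc: "\<not> (i = Suc c \<and> r = 2)"
          consider "i + 1 \<le> c" | "i = c" | "i = Suc c \<and> r = 1" using ri nc by force
          then show False
          proof cases
            case 1
            then show False using A_bounds[OF ij, of n w r] lt v0 x12 by simp
          next
            case 2
            then have "r = 1" using lt ri by auto
            moreover have "cw j w (Suc c) \<noteq> 1" using True by simp
            ultimately show False using lt v0 x12 A1[OF ij, of n w] 2 by (simp add: xo_def split: if_splits)
          next
            case 3
            then show False using lt v0 x12 A1[OF ij, of n w] True by (simp add: xo_def)
          qed
        qed
        then show ?thesis using qr by simp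
      qed
    qed
    then have "card ?G \<le> card (?H \<union> {(2, Suc c)})" by (intro card_mono) auto
    also have "\<dots> \<le> card ?H + 1" by (metis One_nat_def card_Un_le card.empty card_insert_disjoint empty_iff finite.emptyI)
    finally have "card ?G < 2 * j" using cardH[of j] j by simp
    then show ?thesis using mem True unfolding topk_set_def by simp
  next
    case False
    then have xlt: "yo j w c \<le> 7" by (simp add: yo_def)
    have sub: "?H \<union> {(1, Suc c), (2, Suc c)} \<subseteq> ?G"
    proof
      fix q assume q: "q \<in> ?H \<union> {(1, Suc c), (2, Suc c)}"
      then have qS: "q \<in> ?S" using j by auto
      obtain r i where qr: "q = (r, i)" by fastforce
      have r: "r \<in> {1,2}" using q qr by auto
      have "?A (2, c) < ?A (r, i)"
      proof (cases "i < j")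
        case True
        then show ?thesis using AH[OF True, of n w r] v0 xlt j by simp
      next
        case False
        then have "i = Suc c" using q qr by auto
        then show ?thesis using A_bounds[of j "Suc c" n w r] v0 xlt j by simp
      qed
      then show "q \<in> ?G" using qS qr by simp
    qed
    have "card (?H \<union> {(1, Suc c), (2, Suc c)}) = card ?H + 2"
      using j by (subst card_Un_disjoint) auto
    then have "2 * j \<le> card (?H \<union> {(1, Suc c), (2, Suc c)})" using cardH[of j] j by simp
    also have "\<dots> \<le> card ?G" using card_mono[OF fG sub] .
    finally show ?thesis using mem False unfolding topk_set_def by simp
  qed
qed


lemma cw_nth: "d < length w \<Longrightarrow> cw j w (Suc (j + d)) = w ! d"
  by (simp add: cw_def)

lemma ans_inj:
  assumes j: "1 \<le> j" and n: "n = m + j"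
  shows "inj_on (three_sided_answers (2 * j) n \<circ> arr n j) (gen m)"
proof (rule inj_onI)
  fix w w' assume w: "w \<in> gen m" and w': "w' \<in> gen m"
    and e: "(three_sided_answers (2 * j) n \<circ> arr n j) w = (three_sided_answers (2 * j) n \<circ> arr n j) w'"
  have lw: "length w = m" "ok w" "length w' = m" "ok w'" using gen_props w w' by auto
  show "w = w'"
  proof (rule ccontr)
    assume ne: "w \<noteq> w'"
    then obtain d where d: "d < m" "w ! d \<noteq> w' ! d"
      using lw nth_equalityI by metis
    define c where "c = j + d"
    have c: "j \<le> c" "Suc c \<le> n" using d n c_def by auto
    have "three_sided_answers (2 * j) n (arr n j w) (1, 2, Suc c) =
          three_sided_answers (2 * j) n (arr n j w') (1, 2, Suc c)" using e by simp
    then have T: "topk_set (2 * j) ({1..2} \<times> {1..Suc c}) (arr n j w) =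
        topk_set (2 * j) ({1..2} \<times> {1..Suc c}) (arr n j w')"
      using c unfolding three_sided_answers_def three_sided_def by simp
    have c1: "cw j w (Suc c) = 1 \<longleftrightarrow> cw j w' (Suc c) = 1"
      using key1[OF lw(2) j c] key1[OF lw(4) j c] T by simp
    have c2: "cw j w (Suc c) = 2 \<longleftrightarrow> cw j w' (Suc c) = 2"
      using key2[OF lw(2) j c] key2[OF lw(4) j c] T by simp
    have "cw j w (Suc c) \<le> 2" "cw j w' (Suc c) \<le> 2" using cw_le2 lw by auto
    then have "cw j w (Suc c) = cw j w' (Suc c)" using c1 c2 by linarith
    then show False using cw_nth[of d w j] cw_nth[of d w' j] d lw c_def by simp
  qed
qed

theorem theorem10:
  fixes k :: nat
  assumes "even k" and "k \<ge> 2"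
  shows "\<exists>g :: nat \<Rightarrow> real. g \<in> o(\<lambda>n. real n) \<and>
    (\<forall>n. real n > real k / 2 \<longrightarrow>
      (\<exists>F :: (nat \<times> nat \<Rightarrow> nat) set.
         finite F \<and>
         (\<forall>A\<in>F. distinct_array n A) \<and>
         (\<forall>A\<in>F. \<forall>A'\<in>F. \<forall>r\<in>{1..2}. \<forall>i\<in>{1..n}. row_query k A r i = row_query k A' r i) \<and>
         inj_on (three_sided_answers k n) F \<and>
         real (card F) \<ge> 2 powr ((real n - real k / 2) * log 2 (1 + sqrt 2) - g n)))"
proof (rule exI[of _ "\<lambda>_. 0"], intro conjI allI impI)
  show "(\<lambda>_. 0::real) \<in> o(\<lambda>n. real n)" by simp
  fix n :: nat
  assume nk: "real n > real k / 2"
  obtain j where kj: "k = 2 * j" using assms(1) by (auto elim: evenE)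
  have j: "1 \<le> j" using assms(2) kj by simp
  have "n > j" using nk kj by simp
  define m where "m = n - j"
  have n: "n = m + j" using \<open>n > j\<close> m_def by simp
  define F where "F = arr n j ` gen m"
  have inj: "inj_on (three_sided_answers (2 * j) n \<circ> arr n j) (gen m)" using ans_inj[OF j n] .
  have "finite F" using finite_gen F_def by simp
  moreover have "\<forall>A\<in>F. distinct_array n A"
    using A_inj gen_props unfolding F_def distinct_array_def by blast
  moreover have "\<forall>A\<in>F. \<forall>A'\<in>F. \<forall>r\<in>{1..2}. \<forall>i\<in>{1..n}. row_query k A r i = row_query k A' r i"
  proof (intro ballI)
    fix A A' r i assume "A \<in> F" "A' \<in> F" "r \<in> {1..2::nat}" "i \<in> {1..n}"
    moreover then have "r \<in> {1,2}" by auto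
    ultimately show "row_query k A r i = row_query k A' r i" using row_eq unfolding F_def by auto
  qed
  moreover have "inj_on (three_sided_answers k n) F"
    using inj_on_imageI[OF inj] kj F_def by simp
  moreover have "real (card F) \<ge> 2 powr ((real n - real k / 2) * log 2 (1 + sqrt 2) - 0)"
  proof -
    have "card F = card (gen m)" unfolding F_def using inj_on_imageI2[OF inj] by (simp add: card_image)
    have pos: "(0::real) < 1 + sqrt 2" by (simp add: add_pos_nonneg)
    have "real n - real k / 2 = real m" using n kj by simp
    then have "2 powr ((real n - real k / 2) * log 2 (1 + sqrt 2) - 0) = (1 + sqrt 2) ^ m"
      using pos by (simp add: powr_def exp_of_nat_mult[symmetric] log_def ln_realpow[symmetric] mult.commute)
    then show ?thesis using card_gen[of m] \<open>card F = card (gen m)\<close> by simp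
  qed
  ultimately show "\<exists>F :: (nat \<times> nat \<Rightarrow> nat) set.
         finite F \<and>
         (\<forall>A\<in>F. distinct_array n A) \<and>
         (\<forall>A\<in>F. \<forall>A'\<in>F. \<forall>r\<in>{1..2}. \<forall>i\<in>{1..n}. row_query k A r i = row_query k A' r i) \<and>
         inj_on (three_sided_answers k n) F \<and>
         real (card F) \<ge> 2 powr ((real n - real k / 2) * log 2 (1 + sqrt 2) - 0)" by blast
qed

end
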